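(* Let $\mathcal{C}\subset\mathbb{R}^n$ be a bounded open convex set with Hilbert distance $d_{\mathcal{C}}$ and Finsler norm $\|\cdot\|_{\mathcal{C}}$, let $x\in\mathcal{C}$ and $R>0$. Then $$\left(\frac{e^{2R}-1}{2e^{2R}}\right)^n\leq\frac{\mathrm{vol}_e B_R(x)}{\mathrm{vol}_e TB_1(x)}\leq\left(\frac{e^{2R}-1}{2}\right)^n .$$
   Context: $d_{\mathcal{C}}(p,q)=\frac12\ln\Big(\frac{\|q-a\|_e}{\|p-a\|_e}\cdot\frac{\|p-b\|_e}{\|q-b\|_e}\Big)$, where the line through distinct $p,q$ meets $\partial\mathcal{C}$ in $a,b$ with $a,p,q,b$ in this order. Finsler norm $\|u\|_{\mathcal{C}}=\frac12\|u\|_e\big(\frac1{\|p-p^+\|_e}+\frac1{\|p-p^-\|_e}\big)$ for $u\in T_p\mathcal{C}=\mathbb{R}^n$, $p^\pm$ the intersections of the line $p+\mathbb{R}u$ with $\partial\mathcal{C}$. $B_R(x)=\{y\in\mathcal{C}:d_{\mathcal{C}}(x,y)<R\}$, $TB_1(x)=\{u\in\mathbb{R}^n:\|u\|_{\mathcal{C}}<1\}$ (norm at $x$); $\mathrm{vol}_e$ Euclidean volume. *)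

theory Defs
  imports "HOL-Analysis.Analysis"
begin

text \<open>The boundary point hit by the open ray from p in direction u (u \<noteq> 0).
  For a bounded open convex set C and p \<in> C this point exists and is unique.\<close>
definition ray_exit :: "'a::euclidean_space set \<Rightarrow> 'a \<Rightarrow> 'a \<Rightarrow> 'a" where
  "ray_exit C p u = (THE q. q \<in> frontier C \<and> (\<exists>t>0. q = p + t *\<^sub>R u))"

text \<open>Hilbert distance: the line through p, q meets the boundary in a, b with
  a, p, q, b in this order.\<close>
definition hilbert_dist :: "'a::euclidean_space set \<Rightarrow> 'a \<Rightarrow> 'a \<Rightarrow> real" where
  "hilbert_dist C p q =
    (if p = q then 0
     else (let a = ray_exit C p (p - q); b = ray_exit C p (q - p)
           in ln ((norm (q - a) / norm (p - a)) * (norm (p - b) / norm (q - b))) / 2))"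

text \<open>Finsler norm at p of the tangent vector u; p^+ and p^- are the intersections of
  the line p + R u with the boundary.\<close>
definition finsler_norm :: "'a::euclidean_space set \<Rightarrow> 'a \<Rightarrow> 'a \<Rightarrow> real" where
  "finsler_norm C p u =
    (if u = 0 then 0
     else norm u / 2 * (1 / norm (p - ray_exit C p u) + 1 / norm (p - ray_exit C p (- u))))"

definition hilbert_ball :: "'a::euclidean_space set \<Rightarrow> 'a \<Rightarrow> real \<Rightarrow> 'a set" where
  "hilbert_ball C x R = {y \<in> C. hilbert_dist C x y < R}"

definition tangent_unit_ball :: "'a::euclidean_space set \<Rightarrow> 'a \<Rightarrow> 'a set" where
  "tangent_unit_ball C x = {u. finsler_norm C x u < 1}"

end

theory Submission
  imports Defs
begin

definition gg :: "'a::euclidean_space set \<Rightarrow> 'a \<Rightarrow> 'a \<Rightarrow> real" where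
  "gg C x u = norm u / norm (x - ray_exit C x u)"

lemma ray_char:
  fixes C :: "'a::euclidean_space set"
  assumes "bounded C" "open C" "convex C" "x \<in> C" "u \<noteq> 0"
  shows "\<exists>d>0. ray_exit C x u = x + d *\<^sub>R u \<and> (\<forall>s\<ge>0. x + s *\<^sub>R u \<in> C \<longleftrightarrow> s < d)"
proof -
  have xi: "x \<in> interior C" using assms by (simp add: interior_open)
  obtain d where d: "0 < d" "x + d *\<^sub>R u \<in> frontier C"
     "\<And>e. \<lbrakk>0 \<le> e; e < d\<rbrakk> \<Longrightarrow> x + e *\<^sub>R u \<in> interior C"
    using ray_to_frontier[OF assms(1) xi assms(5)] by blast
  have fi: "frontier C \<inter> interior C = {}" by (auto simp: frontier_def)
  have far: "x + s *\<^sub>R u \<notin> closure C" if "s > d" for s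
  proof
    assume "x + s *\<^sub>R u \<in> closure C"
    then have "open_segment x (x + s *\<^sub>R u) \<subseteq> interior C"
      using in_interior_closure_convex_segment[OF assms(3) xi] by blast
    moreover have "x + d *\<^sub>R u \<in> open_segment x (x + s *\<^sub>R u)"
    proof -
      have "x + d *\<^sub>R u = (1 - d/s) *\<^sub>R x + (d/s) *\<^sub>R (x + s *\<^sub>R u)"
        using that d(1) by (simp add: algebra_simps)
      moreover have "x \<noteq> x + s *\<^sub>R u" using that d(1) assms(5) by simp
      moreover have "0 < d/s" "d/s < 1" using that d(1) by simp_all
      ultimately show ?thesis unfolding in_segment by blast
    qed
    ultimately show False using d(2) fi by blast
  qed
  have ex: "ray_exit C x u = x + d *\<^sub>R u"
    unfolding ray_exit_def
  proof (rule the_equality)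
    show "x + d *\<^sub>R u \<in> frontier C \<and> (\<exists>t>0. x + d *\<^sub>R u = x + t *\<^sub>R u)" using d by auto
  next
    fix q assume q: "q \<in> frontier C \<and> (\<exists>t>0. q = x + t *\<^sub>R u)"
    then obtain t where t: "t > 0" "q = x + t *\<^sub>R u" by blast
    have "\<not> t < d"
    proof
      assume "t < d" then have "q \<in> interior C" using d(3)[of t] t by simp
      then show False using q fi by blast
    qed
    moreover have "\<not> t > d" using far[of t] t q unfolding frontier_def by blast
    ultimately have "t = d" by linarith
    then show "q = x + d *\<^sub>R u" using t by simp
  qed
  have "x + s *\<^sub>R u \<in> C \<longleftrightarrow> s < d" if "s \<ge> 0" for s
  proof (cases "s < d")
    case True then show ?thesis using d(3)[OF that True] interior_subset by blast
  next
    case False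
    show ?thesis
    proof (cases "s = d")
      case True then show ?thesis using d(2) fi interior_open[OF assms(2)] False by blast
    next
      case False2: False
      then have "s > d" using False by auto
      then show ?thesis using far[of s] closure_subset False by blast
    qed
  qed
  then show ?thesis using ex d(1) by blast
qed

lemma gg_nonneg: "gg C x u \<ge> 0" by (simp add: gg_def)

lemma gg_zero[simp]: "gg C x 0 = 0" by (simp add: gg_def)

lemma gg_exit:
  fixes C :: "'a::euclidean_space set"
  assumes "bounded C" "open C" "convex C" "x \<in> C" "u \<noteq> 0"
  shows "gg C x u > 0" "ray_exit C x u = x + (1 / gg C x u) *\<^sub>R u"
    "\<And>s. s \<ge> 0 \<Longrightarrow> x + s *\<^sub>R u \<in> C \<longleftrightarrow> s * gg C x u < 1"
proof -
  obtain d where d: "d > 0" "ray_exit C x u = x + d *\<^sub>R u" "\<And>s. s \<ge> 0 \<Longrightarrow> x + s *\<^sub>R u \<in> C \<longleftrightarrow> s < d"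
    using ray_char[OF assms] by blast
  have g: "gg C x u = 1 / d" using d(1,2) assms(5) by (simp add: gg_def)
  show "gg C x u > 0" using g d(1) by simp
  show "ray_exit C x u = x + (1 / gg C x u) *\<^sub>R u" using g d by simp
  show "x + s *\<^sub>R u \<in> C \<longleftrightarrow> s * gg C x u < 1" if "s \<ge> 0" for s
    using d(3)[OF that] d(1) unfolding g by (simp add: divide_simps)
qed

lemma gg_key:
  fixes C :: "'a::euclidean_space set"
  assumes "bounded C" "open C" "convex C" "x \<in> C" "s > 0"
  shows "gg C x u < s \<longleftrightarrow> x + (1 / s) *\<^sub>R u \<in> C"
proof (cases "u = 0")
  case True then show ?thesis using assms by simp
next
  case False
  have "x + (1 / s) *\<^sub>R u \<in> C \<longleftrightarrow> (1/s) * gg C x u < 1"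
    using gg_exit(3)[OF assms(1-4) False, of "1/s"] assms(5) by simp
  also have "\<dots> \<longleftrightarrow> gg C x u < s" using assms(5) by (simp add: field_simps)
  finally show ?thesis by simp
qed

lemma eq_by_less:
  fixes a b :: real
  assumes "a \<ge> 0" "b \<ge> 0" "\<And>s. s > 0 \<Longrightarrow> a < s \<longleftrightarrow> b < s"
  shows "a = b"
proof (rule ccontr)
  assume "a \<noteq> b"
  then show False using assms(3)[of "(a+b)/2"] assms(1,2) by (cases "a < b") auto
qed

lemma gg_hom:
  fixes C :: "'a::euclidean_space set"
  assumes "bounded C" "open C" "convex C" "x \<in> C" "c > 0"
  shows "gg C x (c *\<^sub>R u) = c * gg C x u"
proof (rule eq_by_less)
  show "0 \<le> gg C x (c *\<^sub>R u)" "0 \<le> c * gg C x u" using assms(5) gg_nonneg[of C x] by auto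
  fix s :: real assume s: "s > 0"
  have "gg C x (c *\<^sub>R u) < s \<longleftrightarrow> x + (1 / s) *\<^sub>R (c *\<^sub>R u) \<in> C"
    using gg_key[OF assms(1-4) s] by blast
  also have "\<dots> \<longleftrightarrow> x + (1 / (s / c)) *\<^sub>R u \<in> C" using assms(5) by simp
  also have "\<dots> \<longleftrightarrow> gg C x u < s / c" using gg_key[OF assms(1-4)] s assms(5) by simp
  also have "\<dots> \<longleftrightarrow> c * gg C x u < s" using assms(5) by (simp add: field_simps)
  finally show "gg C x (c *\<^sub>R u) < s \<longleftrightarrow> c * gg C x u < s" .
qed

lemma finsler_gg: "finsler_norm C x u = (gg C x u + gg C x (- u)) / 2"
  by (cases "u = 0") (simp_all add: finsler_norm_def gg_def distrib_left)

lemma hb_char: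
  fixes C :: "'a::euclidean_space set"
  assumes "bounded C" "open C" "convex C" "x \<in> C"
  shows "y \<in> hilbert_ball C x R \<longleftrightarrow>
     exp (2 * R) * gg C x (y - x) + gg C x (x - y) < exp (2 * R) - 1"
proof (cases "y = x")
  case True
  then show ?thesis using assms by (simp add: hilbert_ball_def hilbert_dist_def)
next
  case False
  define E where "E = exp (2 * R)"
  have E1: "E > 0" unfolding E_def by simp
  define \<beta> where "\<beta> = gg C x (y - x)"
  define \<alpha> where "\<alpha> = gg C x (x - y)"
  have ne1: "y - x \<noteq> 0" and ne2: "x - y \<noteq> 0" using False by auto
  have bp: "\<beta> > 0" and b: "ray_exit C x (y - x) = x + (1 / \<beta>) *\<^sub>R (y - x)"
    using gg_exit[OF assms ne1] unfolding \<beta>_def by auto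
  have ap: "\<alpha> > 0" and a: "ray_exit C x (x - y) = x + (1 / \<alpha>) *\<^sub>R (x - y)"
    using gg_exit[OF assms ne2] unfolding \<alpha>_def by auto
  have yC: "y \<in> C \<longleftrightarrow> \<beta> < 1"
    using gg_key[OF assms, of 1 "y - x"] unfolding \<beta>_def by simp
  define n where "n = norm (y - x)"
  have np: "n > 0" using ne1 unfolding n_def by simp
  show ?thesis
  proof (cases "y \<in> C")
    case False
    then have "\<beta> \<ge> 1" using yC by simp
    then have "E * \<beta> \<ge> E" using E1 by simp
    then have "\<not> E * \<beta> + \<alpha> < E - 1" using ap by linarith
    then show ?thesis using False unfolding E_def \<alpha>_def \<beta>_def hilbert_ball_def by simp
  next
    case True
    then have b1: "\<beta> < 1" using yC by simp
    have e1: "y - (x + (1 / \<alpha>) *\<^sub>R (x - y)) = (1 + 1 / \<alpha>) *\<^sub>R (y - x)"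
      by (simp add: algebra_simps)
    have e2: "x - (x + (1 / \<alpha>) *\<^sub>R (x - y)) = (1 / \<alpha>) *\<^sub>R (y - x)"
      by (simp add: algebra_simps)
    have e3: "x - (x + (1 / \<beta>) *\<^sub>R (y - x)) = - ((1 / \<beta>) *\<^sub>R (y - x))"
      by (simp add: algebra_simps)
    have e4: "y - (x + (1 / \<beta>) *\<^sub>R (y - x)) = (1 - 1 / \<beta>) *\<^sub>R (y - x)"
      by (simp add: algebra_simps)
    have ab: "\<bar>1 - 1 / \<beta>\<bar> = 1 / \<beta> - 1" using bp b1 by (simp add: field_simps)
    have ratio: "(norm (y - ray_exit C x (x - y)) / norm (x - ray_exit C x (x - y))) *
        (norm (x - ray_exit C x (y - x)) / norm (y - ray_exit C x (y - x))) = (1 + \<alpha>) / (1 - \<beta>)"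
      unfolding a b e1 e2 e3 e4 norm_minus_cancel norm_scaleR ab n_def[symmetric]
      using ap bp b1 np by (simp add: field_simps)
    have hd: "hilbert_dist C x y = ln ((1 + \<alpha>) / (1 - \<beta>)) / 2"
      using False ratio unfolding hilbert_dist_def Let_def by simp
    have rp: "(1 + \<alpha>) / (1 - \<beta>) > 0" using ap b1 by simp
    have "hilbert_dist C x y < R \<longleftrightarrow> ln ((1 + \<alpha>) / (1 - \<beta>)) < ln E"
      unfolding hd E_def by (simp add: mult.commute)
    also have "\<dots> \<longleftrightarrow> (1 + \<alpha>) / (1 - \<beta>) < E" using rp E1 by simp
    also have "\<dots> \<longleftrightarrow> 1 + \<alpha> < E * (1 - \<beta>)" using b1 by (simp add: divide_simps)
    also have "\<dots> \<longleftrightarrow> E * \<beta> + \<alpha> < E - 1" by (simp add: algebra_simps)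
    finally show ?thesis using True unfolding hilbert_ball_def E_def \<alpha>_def \<beta>_def by simp
  qed
qed

lemma gg_open:
  fixes C :: "'a::euclidean_space set"
  assumes "bounded C" "open C" "convex C" "x \<in> C"
  shows "open {u. gg C x u < a}"
proof (cases "a > 0")
  case False
  then have "{u. gg C x u < a} = {}" using gg_nonneg[of C x] by (auto simp: not_less intro: order.trans)
  then show ?thesis by simp
next
  case True
  have "{u. gg C x u < a} = (\<lambda>u. x + (1 / a) *\<^sub>R u) -` C"
    using gg_key[OF assms True] by auto
  moreover have "open ((\<lambda>u. x + (1 / a) *\<^sub>R u) -` C)"
    by (rule continuous_open_vimage[OF assms(2)]) (intro continuous_intros)
  ultimately show ?thesis by simp
qed

lemma gg_meas:
  fixes C :: "'a::euclidean_space set"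
  assumes "bounded C" "open C" "convex C" "x \<in> C"
  shows "gg C x \<in> borel_measurable borel"
  unfolding borel_measurable_iff_less using gg_open[OF assms] by (simp add: borel_open)

lemma borel_leb: "A \<in> sets borel \<Longrightarrow> A \<in> sets lebesgue"
  using sets_completionI_sets[of A lborel] by simp

lemma gg_lower:
  fixes C :: "'a::euclidean_space set"
  assumes "bounded C" "open C" "convex C" "x \<in> C" "C \<subseteq> ball x M" "M > 0"
  shows "gg C x u \<ge> norm u / M"
proof (rule ccontr)
  assume "\<not> ?thesis"
  then have lt: "gg C x u < norm u / M" by simp
  then have s: "norm u / M > 0" using gg_nonneg[of C x u] by linarith
  then have "x + (1 / (norm u / M)) *\<^sub>R u \<in> C" using gg_key[OF assms(1-4) s] lt by blast
  then have "norm ((1 / (norm u / M)) *\<^sub>R u) < M" using assms(5) by (auto simp: dist_norm)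
  moreover have "u \<noteq> 0" using s by auto
  then have "norm ((1 / (norm u / M)) *\<^sub>R u) = M" using s assms(6) by simp
  ultimately show False by simp
qed

theorem mainTheorem12:
  fixes C :: "'a::euclidean_space set" and x :: 'a and R :: real
  assumes "bounded C" and "open C" and "convex C" and "x \<in> C" and "R > 0"
  shows "((exp (2 * R) - 1) / (2 * exp (2 * R))) ^ DIM('a)
           \<le> measure lebesgue (hilbert_ball C x R) / measure lebesgue (tangent_unit_ball C x)
       \<and> measure lebesgue (hilbert_ball C x R) / measure lebesgue (tangent_unit_ball C x)
           \<le> ((exp (2 * R) - 1) / 2) ^ DIM('a)"
proof -
  note A = assms(1-4)
  define E where "E = exp (2 * R)"
  have E1: "E > 1" unfolding E_def using assms(5) by simp
  define c1 where "c1 = (E - 1) / (2 * E)"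
  define c2 where "c2 = (E - 1) / 2"
  have c1p: "c1 > 0" and c2p: "c2 > 0" unfolding c1_def c2_def using E1 by auto
  define g where "g = gg C x"
  have gn: "\<And>u. g u \<ge> 0" unfolding g_def by (rule gg_nonneg)
  have gh: "\<And>c u. c > 0 \<Longrightarrow> g (c *\<^sub>R u) = c * g u" unfolding g_def using gg_hom[OF A] by blast
  define TB where "TB = tangent_unit_ball C x"
  define HB where "HB = hilbert_ball C x R"
  have TBc: "TB = {u. g u + g (- u) < 2}"
    unfolding TB_def tangent_unit_ball_def finsler_gg g_def by simp
  have HBc: "HB = {y. E * g (y - x) + g (x - y) < E - 1}"
    unfolding HB_def g_def E_def using hb_char[OF A] by blast
  have gm[measurable]: "g \<in> borel_measurable borel" unfolding g_def by (rule gg_meas[OF A])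
  have "{u \<in> space borel. g u + g (- u) < 2} \<in> sets borel" by measurable
  then have TBs: "TB \<in> sets lebesgue" unfolding TBc by (simp add: borel_leb)
  have "{y \<in> space borel. E * g (y - x) + g (x - y) < E - 1} \<in> sets borel" by measurable
  then have HBs: "HB \<in> sets lebesgue" unfolding HBc by (simp add: borel_leb)
  obtain M where M: "M > 0" "C \<subseteq> ball x M" using bounded_subset_ballD[OF assms(1)] by blast
  have gl: "\<And>u. g u \<ge> norm u / M" unfolding g_def using gg_lower[OF A M(2,1)] by blast
  have "TB \<subseteq> ball 0 M"
  proof
    fix u assume "u \<in> TB"
    then have "g u + g (- u) < 2" unfolding TBc by simp
    moreover have "g u + g (- u) \<ge> 2 * (norm u / M)" using gl[of u] gl[of "- u"] by simp
    ultimately have "norm u / M < 1" by linarith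
    then show "u \<in> ball 0 M" using M(1) by (simp add: divide_simps)
  qed
  then have TBf: "TB \<in> lmeasurable"
    using bounded_set_imp_lmeasurable[OF _ TBs] bounded_subset[OF bounded_ball] by blast
  have "HB \<subseteq> C" unfolding HB_def hilbert_ball_def by auto
  then have HBf: "HB \<in> lmeasurable"
    using bounded_set_imp_lmeasurable[OF _ HBs] bounded_subset[OF assms(1)] by blast
  obtain r where r: "r > 0" "ball x r \<subseteq> C" using assms(2,4) open_contains_ball by blast
  have "ball 0 r \<subseteq> TB"
  proof
    fix u :: 'a assume u: "u \<in> ball 0 r"
    have "x + (1 / 1) *\<^sub>R u \<in> C" "x + (1 / 1) *\<^sub>R (- u) \<in> C" using u r(2) by (auto simp: dist_norm)
    then have "g u < 1" "g (- u) < 1" unfolding g_def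
      using gg_key[OF A zero_less_one, of u] gg_key[OF A zero_less_one, of "- u"] by simp_all
    then show "u \<in> TB" unfolding TBc by simp
  qed
  moreover have "ball (0::'a) r \<in> sets lebesgue" using lmeasurable_ball fmeasurableD by blast
  ultimately have "measure lebesgue (ball (0::'a) r) \<le> measure lebesgue TB"
    using measure_mono_fmeasurable[OF _ _ TBf] by blast
  moreover have "measure lebesgue (ball (0::'a) r) > 0" using content_ball_pos[OF r(1)] by simp
  ultimately have TBp: "measure lebesgue TB > 0" by linarith
  have sub1: "(\<lambda>v. c1 *\<^sub>R v + x) ` TB \<subseteq> HB"
  proof
    fix y assume "y \<in> (\<lambda>v. c1 *\<^sub>R v + x) ` TB"
    then obtain w where w: "w \<in> TB" "y = c1 *\<^sub>R w + x" by blast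
    have "E * g (y - x) + g (x - y) = c1 * (E * g w + g (- w))"
      using w(2) gh[OF c1p, of w] gh[OF c1p, of "- w"] by (simp add: algebra_simps)
    also have "\<dots> \<le> c1 * (E * (g w + g (- w)))"
      using c1p mult_right_mono[of 1 E "g (- w)"] E1 gn[of "- w"]
      by (intro mult_left_mono) (auto simp: algebra_simps)
    also have "\<dots> < c1 * (E * 2)" using c1p E1 w(1) unfolding TBc by simp
    also have "\<dots> = E - 1" unfolding c1_def using E1 by simp
    finally show "y \<in> HB" unfolding HBc by simp
  qed
  have "emeasure lebesgue ((\<lambda>v. c1 *\<^sub>R v + x) ` TB) \<le> emeasure lebesgue HB"
    by (rule emeasure_mono[OF sub1 HBs])
  then have "ennreal (\<bar>c1\<bar> ^ DIM('a)) * ennreal (measure lebesgue TB) \<le> ennreal (measure lebesgue HB)"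
    unfolding emeasure_lebesgue_affine emeasure_eq_measure2[OF TBf] emeasure_eq_measure2[OF HBf] .
  then have low: "c1 ^ DIM('a) * measure lebesgue TB \<le> measure lebesgue HB"
    using c1p by (simp add: ennreal_mult'[symmetric] ennreal_le_iff)
  have sub2: "(\<lambda>y. (1 / c2) *\<^sub>R y + (- ((1 / c2) *\<^sub>R x))) ` HB \<subseteq> TB"
  proof
    fix w assume "w \<in> (\<lambda>y. (1 / c2) *\<^sub>R y + (- ((1 / c2) *\<^sub>R x))) ` HB"
    then obtain y where y: "y \<in> HB" "w = (1 / c2) *\<^sub>R y + (- ((1 / c2) *\<^sub>R x))" by blast
    have w1: "w = (1 / c2) *\<^sub>R (y - x)" "- w = (1 / c2) *\<^sub>R (x - y)"
      using y(2) by (simp_all add: algebra_simps)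
    have ic: "1 / c2 > 0" using c2p by simp
    have "g w + g (- w) = (1 / c2) * (g (y - x) + g (x - y))"
    proof -
      have "g w = (1 / c2) * g (y - x)" by (subst w1(1)) (rule gh[OF ic])
      moreover have "g (- w) = (1 / c2) * g (x - y)" by (subst w1(2)) (rule gh[OF ic])
      ultimately show ?thesis by (simp add: algebra_simps)
    qed
    also have "\<dots> \<le> (1 / c2) * (E * g (y - x) + g (x - y))"
    proof (rule mult_left_mono)
      show "g (y - x) + g (x - y) \<le> E * g (y - x) + g (x - y)"
        using mult_right_mono[of 1 E "g (y - x)"] E1 gn[of "y - x"] by simp
    qed (use ic in simp)
    also have "\<dots> < (1 / c2) * (E - 1)" using ic y(1) unfolding HBc by (simp add: divide_strict_right_mono)
    also have "\<dots> = 2" unfolding c2_def using E1 by (simp add: divide_simps)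
    finally show "w \<in> TB" unfolding TBc by simp
  qed
  have "emeasure lebesgue ((\<lambda>y. (1 / c2) *\<^sub>R y + (- ((1 / c2) *\<^sub>R x))) ` HB) \<le> emeasure lebesgue TB"
    by (rule emeasure_mono[OF sub2 TBs])
  then have "ennreal (\<bar>1 / c2\<bar> ^ DIM('a)) * ennreal (measure lebesgue HB) \<le> ennreal (measure lebesgue TB)"
    unfolding emeasure_lebesgue_affine emeasure_eq_measure2[OF TBf] emeasure_eq_measure2[OF HBf] .
  then have "(1 / c2) ^ DIM('a) * measure lebesgue HB \<le> measure lebesgue TB"
    using c2p by (simp add: ennreal_mult'[symmetric] ennreal_le_iff)
  then have up: "measure lebesgue HB \<le> c2 ^ DIM('a) * measure lebesgue TB"
    using c2p by (simp add: divide_simps power_divide mult.commute)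
  have "c1 ^ DIM('a) \<le> measure lebesgue HB / measure lebesgue TB"
    using low TBp by (simp add: divide_simps)
  moreover have "measure lebesgue HB / measure lebesgue TB \<le> c2 ^ DIM('a)"
    using up TBp by (simp add: divide_simps)
  ultimately show ?thesis unfolding c1_def c2_def E_def HB_def TB_def by simp
qed

end
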